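(* For all positive definite matrices $A,B$ of the same size and all $z\in\mathbb C$, $$\|A^z-B^z\|_\infty\le|z|\,\max\{\|A\|_\infty,\|A^{-1}\|_\infty,\|B\|_\infty,\|B^{-1}\|_\infty\}^{1+|\mathrm{Re}(z)|}\,\|A-B\|_\infty .$$
   Context: $\|\cdot\|_\infty$ is the operator norm; $A^z=\exp(z\ln A)$ for positive definite $A$. *)

theory Defs
  imports "HOL-Analysis.Analysis"
begin

definition hermitian :: "complex^'n^'n \<Rightarrow> bool" where
  "hermitian A \<longleftrightarrow> (\<forall>i j. A $ i $ j = cnj (A $ j $ i))"

definition pos_def :: "complex^'n^'n \<Rightarrow> bool" where
  "pos_def A \<longleftrightarrow> hermitian A \<and>
     (\<forall>x::complex^'n. x \<noteq> 0 \<longrightarrow> 0 < Re (\<Sum>i\<in>UNIV. cnj (x $ i) * (A *v x) $ i))"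

text \<open>Operator norm w.r.t. the Euclidean norm on complex^'n.\<close>
definition opnorm :: "complex^'n^'n \<Rightarrow> real" where
  "opnorm A = onorm (\<lambda>x::complex^'n. A *v x)"

primrec mpow :: "complex^'n^'n \<Rightarrow> nat \<Rightarrow> complex^'n^'n" where
  "mpow A 0 = mat 1"
| "mpow A (Suc k) = A ** mpow A k"

definition cscale :: "complex \<Rightarrow> complex^'n^'n \<Rightarrow> complex^'n^'n" where
  "cscale c A = (\<chi> i j. c * A $ i $ j)"

definition mexp :: "complex^'n^'n \<Rightarrow> complex^'n^'n" where
  "mexp A = (\<Sum>k. cscale (1 / of_nat (fact k)) (mpow A k))"

definition mln :: "complex^'n^'n \<Rightarrow> complex^'n^'n" where
  "mln A = (THE L. hermitian L \<and> mexp L = A)"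

definition mcpow :: "complex^'n^'n \<Rightarrow> complex \<Rightarrow> complex^'n^'n" where
  "mcpow A z = mexp (cscale z (mln A))"

end

theory Submission
  imports Defs
begin


definition adj :: "complex^'n^'n \<Rightarrow> complex^'n^'n" where
  "adj M = (\<chi> i j. cnj (M $ j $ i))"
definition hp :: "complex^'n \<Rightarrow> complex^'n \<Rightarrow> complex" where
  "hp x y = (\<Sum>i\<in>UNIV. cnj (x $ i) * y $ i)"
definition dg :: "('n \<Rightarrow> complex) \<Rightarrow> complex^'n^'n" where
  "dg d = (\<chi> i j. if i = j then d i else 0)"
definition unitary :: "complex^'n^'n \<Rightarrow> bool" where
  "unitary U \<longleftrightarrow> adj U ** U = mat 1 \<and> U ** adj U = mat 1"

lemma adj_adj[simp]: "adj (adj M) = M"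
  by (simp add: adj_def vec_eq_iff)

lemma adj_mult: "adj (A ** B) = adj B ** adj A"
  by (simp add: adj_def vec_eq_iff matrix_matrix_mult_def mult.commute)

lemma adj_minus: "adj (A - B) = adj A - adj B"
  by (simp add: adj_def vec_eq_iff)

lemma hermitian_adj: "hermitian A \<longleftrightarrow> adj A = A"
  unfolding hermitian_def adj_def vec_eq_iff by (auto simp: eq_commute)

lemma hp_mult: "hp (M *v x) y = hp x (adj M *v y)"
proof -
  have "hp (M *v x) y = (\<Sum>i\<in>UNIV. \<Sum>j\<in>UNIV. cnj (M$i$j) * cnj (x$j) * y$i)"
    by (simp add: hp_def matrix_vector_mult_def sum_distrib_right)
  also have "\<dots> = (\<Sum>j\<in>UNIV. \<Sum>i\<in>UNIV. cnj (M$i$j) * cnj (x$j) * y$i)"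
    by (rule sum.swap)
  also have "\<dots> = hp x (adj M *v y)"
    by (simp add: hp_def matrix_vector_mult_def adj_def sum_distrib_left mult_ac)
  finally show ?thesis .
qed

lemma hp_cnj: "hp y x = cnj (hp x y)"
  by (simp add: hp_def mult.commute)

lemma Re_hp: "Re (hp x y) = inner x y"
  by (simp add: hp_def inner_vec_def inner_complex_def Re_sum)

lemma inner_complex_expand: "inner (a::complex) b = Re (cnj a * b)"
  by (simp add: inner_complex_def)

definition iv :: "complex^'n \<Rightarrow> complex^'n" where
  "iv v = (\<chi> k. \<i> * v $ k)"

lemma Im_hp: "Im (hp x y) = inner (iv x) y"
  by (simp add: hp_def inner_vec_def inner_complex_def Im_sum iv_def)

lemma hp_zero_iff: "hp x y = 0 \<longleftrightarrow> inner x y = 0 \<and> inner (iv x) y = 0"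
  by (simp add: complex_eq_iff Re_hp Im_hp)

lemma hp_self: "hp x x = complex_of_real ((norm x)^2)"
proof -
  have "hp x x = (\<Sum>i\<in>UNIV. complex_of_real ((cmod (x$i))^2))"
    unfolding hp_def by (intro sum.cong refl) (metis complex_norm_square of_real_power mult.commute)
  also have "\<dots> = complex_of_real (\<Sum>i\<in>UNIV. (cmod (x$i))^2)"
    by (simp only: of_real_sum)
  also have "\<dots> = complex_of_real ((norm x)^2)"
    by (simp add: norm_vec_def L2_set_def sum_nonneg)
  finally show ?thesis .
qed

lemma dg_mult_left: "(dg d ** W) $ i $ j = d i * W $ i $ j"
proof -
  have "(dg d ** W) $ i $ j = (\<Sum>k\<in>UNIV. (if i = k then d i else 0) * W $ k $ j)"
    unfolding dg_def matrix_matrix_mult_def by simp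
  also have "\<dots> = (\<Sum>k\<in>UNIV. if k = i then d i * W $ k $ j else 0)"
    by (rule sum.cong) auto
  finally show ?thesis by simp
qed

lemma dg_mult_right: "(W ** dg d) $ i $ j = W $ i $ j * d j"
proof -
  have "(W ** dg d) $ i $ j = (\<Sum>k\<in>UNIV. W $ i $ k * (if k = j then d k else 0))"
    unfolding dg_def matrix_matrix_mult_def by simp
  also have "\<dots> = (\<Sum>k\<in>UNIV. if k = j then W $ i $ k * d j else 0)"
    by (rule sum.cong) auto
  finally show ?thesis by simp
qed

lemma dg_mult_dg: "dg a ** dg b = dg (\<lambda>i. a i * b i)"
  by (simp add: vec_eq_iff dg_mult_left) (simp add: dg_def)

lemma adj_dg_real: "adj (dg (\<lambda>i. complex_of_real (a i))) = dg (\<lambda>i. complex_of_real (a i))"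
  by (simp add: adj_def dg_def vec_eq_iff)

lemma mat1_dg: "mat 1 = dg (\<lambda>i. 1)"
  by (simp add: mat_def dg_def vec_eq_iff)

lemma hp_scaleR_left: "hp (c *\<^sub>R x) y = c * hp x y"
  by (simp add: hp_def sum_distrib_left scaleR_conv_of_real[where 'a=complex] mult_ac)

lemma hp_scaleR_right: "hp x (c *\<^sub>R y) = c * hp x y"
  by (simp add: hp_def sum_distrib_left scaleR_conv_of_real[where 'a=complex] mult_ac)



lemma hp_add_right: "hp x (y + z) = hp x y + hp x z"
  by (simp add: hp_def distrib_left sum.distrib)
lemma hp_diff_right: "hp x (y - z) = hp x y - hp x z"
  by (simp add: hp_def right_diff_distrib sum_subtractf)

lemma herm_selfadj:
  assumes "hermitian A"
  shows "inner x (A *v y) = inner (A *v x) y"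
proof -
  have "adj A = A" using assms by (simp add: hermitian_adj)
  then have "hp (A *v x) y = hp x (A *v y)" using hp_mult[of A x y] by simp
  then show ?thesis by (metis Re_hp)
qed

lemma mv_scaleR: "(A::complex^'n^'n) *v (c *\<^sub>R x) = c *\<^sub>R (A *v x)"
  using linear_scale[OF matrix_vector_mul_linear] by blast
lemma mv_add: "(A::complex^'n^'n) *v (x + y) = A *v x + A *v y"
  by (simp add: matrix_vector_right_distrib)
lemma mv_diff: "(A::complex^'n^'n) *v (x - y) = A *v x - A *v y"
  by (simp add: matrix_vector_mult_diff_distrib)

definition eig :: "complex^'n^'n \<Rightarrow> complex^'n \<Rightarrow> bool" where
  "eig A v \<longleftrightarrow> (\<exists>l::real. A *v v = l *\<^sub>R v)"

definition good :: "complex^'n^'n \<Rightarrow> (complex^'n) list \<Rightarrow> bool" where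
  "good A vs \<longleftrightarrow> (\<forall>v\<in>set vs. norm v = 1 \<and> eig A v) \<and>
     (\<forall>i<length vs. \<forall>j<length vs. i \<noteq> j \<longrightarrow> hp (vs!i) (vs!j) = 0)"

lemma exists_orth:
  fixes vs :: "(complex^'n) list"
  assumes "length vs < CARD('n)"
  shows "\<exists>x. x \<noteq> 0 \<and> (\<forall>v\<in>set vs. hp v x = 0)"
proof -
  let ?T = "set vs \<union> iv ` set vs"
  have "card ?T \<le> card (set vs) + card (iv ` set vs)" by (rule card_Un_le)
  also have "\<dots> \<le> 2 * length vs"
    using card_length[of vs] card_image_le[of "set vs" iv] by simp
  finally have dl: "dim ?T < DIM(complex^'n)"
    using dim_le_card'[of ?T] assms by (simp add: DIM_cart)
  obtain x where x: "x \<noteq> 0" "\<And>y. y \<in> span ?T \<Longrightarrow> orthogonal x y"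
    using orthogonal_to_subspace_exists[OF dl] by blast
  have "hp v x = 0" if "v \<in> set vs" for v
  proof -
    have "orthogonal x v" using that by (intro x(2) span_base) simp
    moreover have "orthogonal x (iv v)" using that by (intro x(2) span_base) simp
    ultimately show ?thesis by (simp add: hp_zero_iff orthogonal_def inner_commute)
  qed
  then show ?thesis using x(1) by blast
qed

lemma scale_sq: "inner (c *\<^sub>R w) ((A::complex^'n^'n) *v (c *\<^sub>R w)) = c^2 * inner w (A *v w)"
  by (simp add: mv_scaleR power2_eq_square)

lemma find_eig:
  fixes A :: "complex^'n^'n"
  assumes herm: "hermitian A" and ev: "\<forall>v\<in>set vs. eig A v"
    and ex: "x \<noteq> 0" "\<forall>v\<in>set vs. hp v x = 0"
  shows "\<exists>x0. norm x0 = 1 \<and> (\<forall>v\<in>set vs. hp v x0 = 0) \<and> eig A x0"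
proof -
  define S where "S = {x. \<forall>v\<in>set vs. hp v x = 0}"
  have S_alt: "S = (\<Inter>v\<in>set vs. {x. inner v x = 0} \<inter> {x. inner (iv v) x = 0})"
    unfolding S_def by (auto simp: hp_zero_iff)
  have clS: "closed S" unfolding S_alt
    by (intro closed_INT closed_Int ballI closed_hyperplane)
  have Ssc: "c *\<^sub>R y \<in> S" if "y \<in> S" for c y
    using that by (simp add: S_def hp_scaleR_right)
  have Sdiff: "y - w \<in> S" if "y \<in> S" "w \<in> S" for y w
    using that by (simp add: S_def hp_diff_right)
  have Sadd: "y + w \<in> S" if "y \<in> S" "w \<in> S" for y w
    using that by (simp add: S_def hp_add_right)
  have Sinv: "A *v y \<in> S" if "y \<in> S" for y
  proof -
    have "hp v (A *v y) = 0" if v: "v \<in> set vs" for v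
    proof -
      obtain l where l: "A *v v = l *\<^sub>R v" using ev v by (auto simp: eig_def)
      have "adj A = A" using herm by (simp add: hermitian_adj)
      then have "hp v (A *v y) = hp (A *v v) y" using hp_mult[of A v y] by simp
      also have "\<dots> = l * hp v y" by (simp add: l hp_scaleR_left)
      also have "\<dots> = 0" using \<open>y \<in> S\<close> v by (simp add: S_def)
      finally show ?thesis .
    qed
    then show ?thesis by (simp add: S_def)
  qed
  define K where "K = S \<inter> sphere 0 1"
  have cK: "compact K" unfolding K_def by (intro closed_Int_compact clS compact_sphere)
  have "(1 / norm x) *\<^sub>R x \<in> S" by (rule Ssc) (simp add: S_def ex)
  then have "(1 / norm x) *\<^sub>R x \<in> K" using ex by (simp add: K_def)
  then have neK: "K \<noteq> {}" by blast
  define f where "f y = inner y (A *v y)" for y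
  have bl: "bounded_linear ((*v) A)"
    by (simp add: linear_conv_bounded_linear matrix_vector_mul_linear)
  have cf: "continuous_on K f" unfolding f_def
    by (intro continuous_intros linear_continuous_on[OF bl])
  obtain x0 where x0: "x0 \<in> K" and mx: "\<And>y. y \<in> K \<Longrightarrow> f y \<le> f x0"
    using continuous_attains_sup[OF cK neK cf] by blast
  define q where "q = f x0"
  have x0S: "x0 \<in> S" and nx0: "norm x0 = 1" using x0 by (auto simp: K_def)
  have bound: "f w \<le> q * (norm w)^2" if "w \<in> S" for w
  proof (cases "w = 0")
    case True then show ?thesis by (simp add: f_def)
  next
    case False
    let ?w = "(1 / norm w) *\<^sub>R w"
    have "?w \<in> K" using False that by (simp add: K_def Ssc)
    then have "f ?w \<le> q" using mx q_def by blast
    then have "(1 / norm w)^2 * f w \<le> q" unfolding f_def by (simp only: scale_sq)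
    then show ?thesis using False by (simp add: field_simps power2_eq_square)
  qed
  define r where "r = A *v x0 - q *\<^sub>R x0"
  have rS: "r \<in> S" unfolding r_def using x0S by (intro Sdiff Sinv Ssc)
  define b where "b = inner r (A *v x0)"
  define d where "d = f r"
  define m where "m = inner x0 r"
  define e where "e = inner r r"
  define c where "c = q * e - d"
  have b_eq: "b = e + q * m"
    by (simp add: b_def e_def m_def r_def inner_diff_right inner_diff_left inner_commute right_diff_distrib)
  have c_nn: "0 \<le> c" using bound[OF rS] by (simp add: c_def d_def e_def power2_norm_eq_inner)
  have H: "2 * t * e \<le> t^2 * c" for t :: real
  proof -
    have inS: "x0 + t *\<^sub>R r \<in> S" using x0S rS by (intro Sadd Ssc)
    have sa: "inner x0 (A *v r) = b"
      using herm_selfadj[OF herm, of x0 r] by (simp add: b_def inner_commute)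
    have fx: "f (x0 + t *\<^sub>R r) = q + 2 * t * b + t^2 * d"
      using sa by (simp add: f_def q_def d_def b_def mv_add mv_scaleR inner_add_left
        inner_add_right power2_eq_square algebra_simps)
    have xx: "x0 \<bullet> x0 = 1" using nx0 norm_eq_1 by blast
    have nx: "(norm (x0 + t *\<^sub>R r))^2 = 1 + 2 * t * m + t^2 * e"
      unfolding power2_norm_eq_inner using xx by (simp add:  inner_add_left inner_add_right m_def e_def
        inner_commute power2_eq_square algebra_simps)
    have "q + 2 * t * b + t^2 * d \<le> q * (1 + 2 * t * m + t^2 * e)"
      using bound[OF inS] fx nx by simp
    then show ?thesis by (simp add: b_eq c_def algebra_simps)
  qed
  have e0: "e = 0"
  proof (rule ccontr)
    assume "e \<noteq> 0"
    then have ep: "e > 0" by (simp add: e_def)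
    define t where "t = e / (c + 1)"
    have tp: "t > 0" using ep c_nn by (simp add: t_def)
    have "t * (2 * e) \<le> t * (t * c)" using H[of t] by (simp add: power2_eq_square algebra_simps)
    then have "2 * e \<le> t * c" using tp by simp
    also have "t * c \<le> e" using ep c_nn by (simp add: t_def field_simps)
    finally show False using ep by simp
  qed
  then have "r = 0" by (simp add: e_def)
  then have "A *v x0 = q *\<^sub>R x0" by (simp add: r_def)
  then have "eig A x0" by (auto simp: eig_def)
  then show ?thesis using nx0 x0S by (auto simp: S_def)
qed



lemma good_ext:
  fixes A :: "complex^'n^'n"
  assumes herm: "hermitian A" and k: "k \<le> CARD('n)"
  shows "\<exists>vs. length vs = k \<and> good A vs"
  using k
proof (induction k)
  case 0
  show ?case by (auto simp: good_def)
next
  case (Suc k)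
  then obtain vs where vs: "length vs = k" "good A vs" by auto
  then have "length vs < CARD('n)" using Suc.prems by simp
  then obtain x where x: "x \<noteq> 0" "\<forall>v\<in>set vs. hp v x = 0" using exists_orth by blast
  have ev: "\<forall>v\<in>set vs. eig A v" using vs(2) by (simp add: good_def)
  obtain x0 where x0: "norm x0 = 1" "\<forall>v\<in>set vs. hp v x0 = 0" "eig A x0"
    using find_eig[OF herm ev x] by blast
  let ?ws = "vs @ [x0]"
  have g1: "\<forall>v\<in>set ?ws. norm v = 1 \<and> eig A v" using vs(2) x0 by (auto simp: good_def)
  have g2: "\<forall>i<length ?ws. \<forall>j<length ?ws. i \<noteq> j \<longrightarrow> hp (?ws ! i) (?ws ! j) = 0"
  proof (intro allI impI)
    fix i j assume ij: "i < length ?ws" "j < length ?ws" "i \<noteq> j"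
    show "hp (?ws ! i) (?ws ! j) = 0"
    proof (cases "i < k")
      case i: True
      show ?thesis
      proof (cases "j < k")
        case True
        then show ?thesis using i ij vs by (simp add: nth_append good_def)
      next
        case False
        then have "j = k" using ij vs by simp
        then show ?thesis using i vs x0(2) by (simp add: nth_append)
      qed
    next
      case False
      then have ik: "i = k" using ij vs by simp
      then have jk: "j < k" using ij vs by simp
      have "hp x0 (vs ! j) = cnj (hp (vs ! j) x0)" by (rule hp_cnj)
      also have "\<dots> = 0" using x0(2) jk vs by simp
      finally show ?thesis using ik jk vs by (simp add: nth_append)
    qed
  qed
  have "good A ?ws" unfolding good_def using g1 g2 by blast
  moreover have "length ?ws = Suc k" using vs by simp
  ultimately show ?case by blast
qed

lemma spectral:
  fixes A :: "complex^'n^'n"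
  assumes herm: "hermitian A"
  shows "\<exists>U a. unitary U \<and> A = U ** dg (\<lambda>i. complex_of_real (a i)) ** adj U"
proof -
  obtain vs where vs: "length vs = CARD('n)" "good A vs" using good_ext[OF herm, of "CARD('n)"] by auto
  obtain h where h: "bij_betw h {0..<card (UNIV::'n set)} (UNIV::'n set)"
    using ex_bij_betw_nat_finite[of "UNIV::'n set"] by auto
  define g where "g = inv_into {0..<CARD('n)} h"
  have gb: "bij_betw g UNIV {0..<CARD('n)}" unfolding g_def by (rule bij_betw_inv_into[OF h])
  have glt: "g j < length vs" for j using gb vs(1) by (auto simp: bij_betw_def)
  have ginj: "g j = g k \<Longrightarrow> j = k" for j k using gb by (auto simp: bij_betw_def inj_on_def)
  define col where "col j = vs ! g j" for j
  have colin: "col j \<in> set vs" for j using glt by (simp add: col_def)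
  have ncol: "norm (col j) = 1" for j using colin vs(2) by (auto simp: good_def)
  have ecol: "eig A (col j)" for j using colin vs(2) by (auto simp: good_def)
  have ocol: "j \<noteq> k \<Longrightarrow> hp (col j) (col k) = 0" for j k
    using vs(2) glt ginj unfolding good_def col_def by blast
  define a where "a j = (SOME l. A *v col j = l *\<^sub>R col j)" for j
  have acol: "A *v col j = a j *\<^sub>R col j" for j
    using ecol[of j] unfolding eig_def a_def by (rule someI_ex)
  define U :: "complex^'n^'n" where "U = (\<chi> i j. col j $ i)"
  have UU: "adj U ** U = mat 1"
  proof -
    have "(adj U ** U) $ j $ k = (if j = k then 1 else 0)" for j k
    proof -
      have "(adj U ** U) $ j $ k = hp (col j) (col k)"
        by (simp add: adj_def U_def matrix_matrix_mult_def hp_def)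
      also have "\<dots> = (if j = k then 1 else 0)"
        using ocol[of j k] hp_self[of "col j"] ncol[of j] by auto
      finally show ?thesis .
    qed
    then show ?thesis by (simp add: vec_eq_iff mat_def)
  qed
  then have UU2: "U ** adj U = mat 1" using matrix_left_right_inverse by blast
  have AU: "A ** U = U ** dg (\<lambda>i. complex_of_real (a i))"
  proof -
    have "(A ** U) $ i $ k = (U ** dg (\<lambda>i. complex_of_real (a i))) $ i $ k" for i k
    proof -
      have "(A ** U) $ i $ k = (A *v col k) $ i"
        by (simp add: U_def matrix_matrix_mult_def matrix_vector_mult_def)
      also have "\<dots> = complex_of_real (a k) * col k $ i"
        by (simp add: acol) (simp add: scaleR_conv_of_real)
      also have "\<dots> = (U ** dg (\<lambda>i. complex_of_real (a i))) $ i $ k"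
        by (simp add: dg_mult_right U_def mult.commute)
      finally show ?thesis .
    qed
    then show ?thesis by (simp add: vec_eq_iff)
  qed
  have "A = A ** (U ** adj U)" by (simp add: UU2)
  also have "\<dots> = U ** dg (\<lambda>i. complex_of_real (a i)) ** adj U"
    by (simp add: matrix_mul_assoc AU)
  finally show ?thesis using UU UU2 unfolding unitary_def by blast
qed



lemma unit_cancel1: "unitary U \<Longrightarrow> P ** adj U ** U = P"
  by (simp add: unitary_def matrix_mul_assoc[symmetric])
lemma unit_cancel2: "unitary U \<Longrightarrow> P ** U ** adj U = P"
  by (simp add: unitary_def matrix_mul_assoc[symmetric])

lemma mpow_conj:
  assumes U: "unitary U"
  shows "mpow (U ** X ** adj U) k = U ** mpow X k ** adj U"
proof (induction k)
  case 0
  then show ?case using U by (simp add: unitary_def)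
next
  case (Suc k)
  then show ?case using U by (simp add: matrix_mul_assoc unit_cancel1)
qed

lemma mpow_dg: "mpow (dg d) k = dg (\<lambda>i. d i ^ k)"
  by (induction k) (simp_all add: mat1_dg dg_mult_dg)

lemma cscale_dg_left: "cscale c X = dg (\<lambda>i. c) ** X"
  by (simp add: cscale_def vec_eq_iff dg_mult_left)

lemma dg_const_comm: "dg (\<lambda>i. c) ** X = X ** dg (\<lambda>i. c)"
  by (simp add: vec_eq_iff dg_mult_left dg_mult_right mult.commute)

lemma cscale_conj: "cscale c (U ** X ** V) = U ** cscale c X ** V"
proof -
  have "dg (\<lambda>i. c) ** (U ** X ** V) = (dg (\<lambda>i. c) ** U) ** X ** V" by (simp add: matrix_mul_assoc)
  also have "\<dots> = (U ** dg (\<lambda>i. c)) ** X ** V" by (simp only: dg_const_comm)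
  also have "\<dots> = U ** (dg (\<lambda>i. c) ** X) ** V" by (simp add: matrix_mul_assoc)
  finally show ?thesis by (simp add: cscale_dg_left)
qed

lemma cscale_dg: "cscale c (dg d) = dg (\<lambda>i. c * d i)"
  by (simp add: cscale_dg_left dg_mult_dg)

lemma sum_dg: "sum (\<lambda>k. dg (g k)) A = dg (\<lambda>i. sum (\<lambda>k. g k i) A)"
  by (simp add: vec_eq_iff dg_def sum_component)

lemma dg_tendsto:
  assumes "\<And>i. ((\<lambda>n. s n i) \<longlongrightarrow> L i) F"
  shows "((\<lambda>n. dg (s n)) \<longlongrightarrow> dg L) F"
  unfolding dg_def
  by (intro tendsto_vec_lambda) (auto simp: assms)

lemma dg_sums:
  assumes "\<And>i. (\<lambda>k. g k i) sums L i"
  shows "(\<lambda>k. dg (g k)) sums dg L"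
  using assms unfolding sums_def sum_dg by (intro dg_tendsto) auto

lemma exp_sums_c: "(\<lambda>k. 1 / of_nat (fact k) * x ^ k) sums exp (x::complex)"
proof -
  have "(\<lambda>k. x ^ k /\<^sub>R fact k) = (\<lambda>k. 1 / of_nat (fact k) * x ^ k)"
    by (simp add: fun_eq_iff scaleR_conv_of_real field_simps)
  then show ?thesis using exp_converges[of x] by simp
qed

lemma linear_conj: "linear (\<lambda>M::complex^'n^'n. U ** M ** V)"
proof (rule linearI)
  fix x y :: "complex^'n^'n"
  show "U ** (x + y) ** V = U ** x ** V + U ** y ** V"
    by (simp add: vec_eq_iff matrix_matrix_mult_def distrib_left distrib_right sum.distrib)
next
  fix c :: real and x :: "complex^'n^'n"
  show "U ** (c *\<^sub>R x) ** V = c *\<^sub>R (U ** x ** V)"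
    by (simp add: vec_eq_iff matrix_matrix_mult_def scaleR_sum_right sum_distrib_right)
qed

lemma mexp_conj_dg:
  assumes U: "unitary U"
  shows "mexp (U ** dg d ** adj U) = U ** dg (\<lambda>i. exp (d i)) ** adj U"
proof -
  have bl: "bounded_linear (\<lambda>M. U ** M ** adj U)"
    by (rule linear_conv_bounded_linear[THEN iffD1, OF linear_conj])
  have s1: "(\<lambda>k. dg (\<lambda>i. 1 / of_nat (fact k) * d i ^ k)) sums dg (\<lambda>i. exp (d i))"
    by (rule dg_sums) (rule exp_sums_c)
  have s2: "(\<lambda>k. U ** dg (\<lambda>i. 1 / of_nat (fact k) * d i ^ k) ** adj U) sums (U ** dg (\<lambda>i. exp (d i)) ** adj U)"
    by (rule bounded_linear.sums[OF bl s1])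
  have eq: "cscale (1 / of_nat (fact k)) (mpow (U ** dg d ** adj U) k)
      = U ** dg (\<lambda>i. 1 / of_nat (fact k) * d i ^ k) ** adj U" for k
    by (simp add: mpow_conj[OF U] mpow_dg cscale_conj cscale_dg)
  show ?thesis unfolding mexp_def eq using s2 by (rule sums_unique[symmetric])
qed

lemma log_unique:
  assumes U: "unitary U" and V: "unitary V"
    and E: "U ** dg (\<lambda>i. complex_of_real (exp (a i))) ** adj U
          = V ** dg (\<lambda>i. complex_of_real (exp (b i))) ** adj V"
  shows "U ** dg (\<lambda>i. complex_of_real (a i)) ** adj U = V ** dg (\<lambda>i. complex_of_real (b i)) ** adj V"
proof -
  define W where "W = adj U ** V"
  have "adj U ** (U ** dg (\<lambda>i. complex_of_real (exp (a i))) ** adj U) ** V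
      = dg (\<lambda>i. complex_of_real (exp (a i))) ** W"
    using U by (simp add: W_def matrix_mul_assoc unitary_def)
  moreover have "adj U ** (V ** dg (\<lambda>i. complex_of_real (exp (b i))) ** adj V) ** V
      = W ** dg (\<lambda>i. complex_of_real (exp (b i)))"
    using V by (simp add: W_def matrix_mul_assoc unit_cancel1)
  ultimately have E2: "dg (\<lambda>i. complex_of_real (exp (a i))) ** W = W ** dg (\<lambda>i. complex_of_real (exp (b i)))"
    using E by simp
  have "(dg (\<lambda>i. complex_of_real (a i)) ** W) $ i $ j = (W ** dg (\<lambda>i. complex_of_real (b i))) $ i $ j" for i j
  proof -
    have "complex_of_real (exp (a i)) * W $ i $ j = W $ i $ j * complex_of_real (exp (b j))"
      using E2 dg_mult_left[of _ W i j] dg_mult_right[of W _ i j] by metis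
    then have "W $ i $ j = 0 \<or> a i = b j" by (auto simp: mult.commute)
    then show ?thesis by (auto simp: dg_mult_left dg_mult_right mult.commute)
  qed
  then have C: "dg (\<lambda>i. complex_of_real (a i)) ** W = W ** dg (\<lambda>i. complex_of_real (b i))"
    by (simp add: vec_eq_iff)
  have WV: "W ** adj V = adj U" using V by (simp add: W_def unit_cancel2)
  have "U ** dg (\<lambda>i. complex_of_real (a i)) ** adj U = U ** (dg (\<lambda>i. complex_of_real (a i)) ** W) ** adj V"
    by (simp add: WV matrix_mul_assoc[symmetric])
  also have "\<dots> = U ** W ** dg (\<lambda>i. complex_of_real (b i)) ** adj V"
    by (simp add: C matrix_mul_assoc)
  also have "\<dots> = V ** dg (\<lambda>i. complex_of_real (b i)) ** adj V"
    using U by (simp add: W_def matrix_mul_assoc unitary_def)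
  finally show ?thesis .
qed

lemma hermitian_conj_real: "hermitian (U ** dg (\<lambda>i. complex_of_real (a i)) ** adj U)"
  by (simp add: hermitian_adj adj_mult adj_dg_real matrix_mul_assoc)

lemma mln_eq:
  assumes U: "unitary U" and apos: "\<And>i. a i > 0"
    and A: "A = U ** dg (\<lambda>i. complex_of_real (a i)) ** adj U"
  shows "mln A = U ** dg (\<lambda>i. complex_of_real (ln (a i))) ** adj U"
  unfolding mln_def
proof (rule the_equality)
  let ?L = "U ** dg (\<lambda>i. complex_of_real (ln (a i))) ** adj U"
  have "mexp ?L = U ** dg (\<lambda>i. exp (complex_of_real (ln (a i)))) ** adj U"
    by (rule mexp_conj_dg[OF U])
  also have "\<dots> = A" using apos by (simp add: A exp_of_real)
  finally show "hermitian ?L \<and> mexp ?L = A" by (simp add: hermitian_conj_real)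
next
  fix K assume K: "hermitian K \<and> mexp K = A"
  obtain V b where V: "unitary V" and Kd: "K = V ** dg (\<lambda>i. complex_of_real (b i)) ** adj V"
    using spectral K by blast
  have "mexp K = V ** dg (\<lambda>i. exp (complex_of_real (b i))) ** adj V"
    unfolding Kd by (rule mexp_conj_dg[OF V])
  then have "U ** dg (\<lambda>i. complex_of_real (exp (ln (a i)))) ** adj U
      = V ** dg (\<lambda>i. complex_of_real (exp (b i))) ** adj V"
    using K apos by (simp add: A exp_of_real)
  then have "U ** dg (\<lambda>i. complex_of_real (ln (a i))) ** adj U = V ** dg (\<lambda>i. complex_of_real (b i)) ** adj V"
    by (rule log_unique[OF U V])
  then show "K = U ** dg (\<lambda>i. complex_of_real (ln (a i))) ** adj U" using Kd by simp
qed

lemma mcpow_eq: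
  assumes U: "unitary U" and apos: "\<And>i. a i > 0"
    and A: "A = U ** dg (\<lambda>i. complex_of_real (a i)) ** adj U"
  shows "mcpow A z = U ** dg (\<lambda>i. exp (z * complex_of_real (ln (a i)))) ** adj U"
  unfolding mcpow_def mln_eq[OF U apos A] cscale_conj cscale_dg
  by (rule mexp_conj_dg[OF U])



lemma bl_mv: "bounded_linear ((*v) (M::complex^'n^'n))"
  by (rule linear_conv_bounded_linear[THEN iffD1, OF matrix_vector_mul_linear])

lemma opnorm_bound: "norm (M *v x) \<le> opnorm M * norm x"
  unfolding opnorm_def by (rule onorm[OF bl_mv])

lemma opnorm_nn: "0 \<le> opnorm M"
  unfolding opnorm_def by (rule onorm_pos_le[OF bl_mv])

lemma opnorm_le: "(\<And>x. norm (M *v x) \<le> b * norm x) \<Longrightarrow> opnorm M \<le> b"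
  unfolding opnorm_def by (rule onorm_le)

lemma unitary_adj: "unitary U \<Longrightarrow> unitary (adj U)"
  by (simp add: unitary_def)

lemma unitary_norm:
  assumes "unitary U" shows "norm (U *v x) = norm x"
proof -
  have "hp (U *v x) (U *v x) = hp x x"
    using assms by (simp add: hp_mult matrix_vector_mul_assoc unitary_def)
  then have "complex_of_real ((norm (U *v x))^2) = complex_of_real ((norm x)^2)" by (simp only: hp_self)
  then have "(norm (U *v x))^2 = (norm x)^2" by (simp only: of_real_eq_iff)
  then show ?thesis by (simp add: power2_eq_iff_nonneg)
qed

lemma opnorm_unit_conj:
  assumes U: "unitary U" and V: "unitary V"
  shows "opnorm (U ** Y ** V) \<le> opnorm Y"
proof (rule opnorm_le)
  fix x
  have "norm ((U ** Y ** V) *v x) = norm (Y *v (V *v x))"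
    using U by (simp add: matrix_vector_mul_assoc[symmetric] unitary_norm)
  also have "\<dots> \<le> opnorm Y * norm (V *v x)" by (rule opnorm_bound)
  also have "\<dots> = opnorm Y * norm x" using V by (simp add: unitary_norm)
  finally show "norm ((U ** Y ** V) *v x) \<le> opnorm Y * norm x" .
qed

lemma mvc: "(M *v y) $ i = (\<Sum>j\<in>UNIV. M $ i $ j * y $ j)"
  by (simp add: matrix_vector_mult_def)

lemma dg_mv: "(dg d *v y) $ i = d i * y $ i"
proof -
  have "(dg d *v y) $ i = (\<Sum>k\<in>UNIV. (if i = k then d i else 0) * y $ k)"
    unfolding dg_def matrix_vector_mult_def by simp
  also have "\<dots> = (\<Sum>k\<in>UNIV. if k = i then d i * y $ k else 0)"
    by (rule sum.cong) auto
  finally show ?thesis by simp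
qed

lemma norm_dg_mv:
  assumes "\<And>i. cmod (d i) \<le> B" "0 \<le> B"
  shows "norm (dg d *v y) \<le> B * norm y"
proof -
  have "norm (dg d *v y) = L2_set (\<lambda>i. cmod (d i) * cmod (y $ i)) UNIV"
    by (simp add: norm_vec_def dg_mv norm_mult)
  also have "\<dots> \<le> L2_set (\<lambda>i. B * cmod (y $ i)) UNIV"
    by (rule L2_set_mono) (auto intro: mult_right_mono assms)
  also have "\<dots> = B * norm y"
    by (simp add: norm_vec_def L2_set_right_distrib assms(2))
  finally show ?thesis .
qed

lemma schur:
  fixes X :: "complex^'n^'n" and f g :: "real \<Rightarrow> 'n \<Rightarrow> complex" and F G :: "real \<Rightarrow> real"
  assumes cf: "\<And>i. continuous_on {0..1} (\<lambda>s. f s i)"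
    and cg: "\<And>j. continuous_on {0..1} (\<lambda>s. g s j)"
    and cFG: "continuous_on {0..1} (\<lambda>s. F s * G s)"
    and bf: "\<And>s i. s \<in> {0..1} \<Longrightarrow> cmod (f s i) \<le> F s"
    and bg: "\<And>s j. s \<in> {0..1} \<Longrightarrow> cmod (g s j) \<le> G s"
    and C: "integral {0..1} (\<lambda>s. F s * G s) \<le> C"
  shows "opnorm (\<chi> i j. integral {0..1} (\<lambda>s. f s i * g s j) * X $ i $ j) \<le> C * opnorm X"
proof (rule opnorm_le)
  fix x :: "complex^'n"
  define Y where "Y = (\<chi> i j. integral {0..1} (\<lambda>s. f s i * g s j) * X $ i $ j)"
  define h where "h s = (\<chi> i. \<Sum>j\<in>UNIV. f s i * g s j * X $ i $ j * x $ j)" for s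
  have ch: "continuous_on {0..1} h" unfolding h_def
    by (intro continuous_on_vec_lambda continuous_on_sum continuous_intros cf cg)
  then have ih: "h integrable_on {0..1}" by (rule integrable_continuous_real)
  have ifg: "(\<lambda>s. f s i * g s j) integrable_on {0..1}" for i j
    by (intro integrable_continuous_real continuous_intros cf cg)
  have Yx: "Y *v x = integral {0..1} h"
  proof -
    have "(Y *v x) $ i = integral {0..1} h $ i" for i
    proof -
      have "integral {0..1} h $ i = integral {0..1} (\<lambda>s. h s $ i)"
        using integral_linear[OF ih bounded_linear_vec_nth[of i], unfolded o_def] by simp
      also have "\<dots> = integral {0..1} (\<lambda>s. \<Sum>j\<in>UNIV. f s i * g s j * (X $ i $ j * x $ j))"
        by (simp add: h_def mult.assoc)
      also have "\<dots> = (\<Sum>j\<in>UNIV. integral {0..1} (\<lambda>s. f s i * g s j * (X $ i $ j * x $ j)))"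
        by (rule integral_sum) (auto intro: integrable_on_mult_left ifg)
      also have "\<dots> = (\<Sum>j\<in>UNIV. integral {0..1} (\<lambda>s. f s i * g s j) * (X $ i $ j * x $ j))"
        by (simp only: integral_mult_left)
      also have "\<dots> = (Y *v x) $ i"
        by (simp add: Y_def matrix_vector_mult_def mult.assoc)
      finally show ?thesis by simp
    qed
    then show ?thesis by (simp add: vec_eq_iff)
  qed
  have hb: "norm (h s) \<le> F s * G s * (opnorm X * norm x)" if s: "s \<in> {0..1}" for s
  proof -
    have F0: "0 \<le> F s" using bf[OF s] norm_ge_zero order_trans by blast
    have G0: "0 \<le> G s" using bg[OF s] norm_ge_zero order_trans by blast
    have "h s = dg (f s) *v (X *v (dg (g s) *v x))"
      unfolding vec_eq_iff h_def vec_lambda_beta dg_mv mvc[of X] dg_mv sum_distrib_left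
      by (intro allI sum.cong refl) (simp add: mult_ac)
    also have "norm \<dots> \<le> F s * norm (X *v (dg (g s) *v x))"
      by (rule norm_dg_mv) (auto intro: bf s F0)
    also have "\<dots> \<le> F s * (opnorm X * norm (dg (g s) *v x))"
      by (rule mult_left_mono[OF opnorm_bound F0])
    also have "\<dots> \<le> F s * (opnorm X * (G s * norm x))"
      by (intro mult_left_mono F0 opnorm_nn norm_dg_mv bg s G0)
    finally show ?thesis by (simp add: mult_ac)
  qed
  have iFG: "(\<lambda>s. F s * G s * (opnorm X * norm x)) integrable_on {0..1}"
    by (intro integrable_continuous_real continuous_intros cFG)
  have "norm (Y *v x) \<le> integral {0..1} (\<lambda>s. F s * G s * (opnorm X * norm x))"
    unfolding Yx by (rule integral_norm_bound_integral[OF ih iFG hb])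
  also have "\<dots> = integral {0..1} (\<lambda>s. F s * G s) * (opnorm X * norm x)"
    by simp
  also have "\<dots> \<le> C * (opnorm X * norm x)"
    by (rule mult_right_mono[OF C]) (simp add: opnorm_nn)
  finally show "norm (Y *v x) \<le> C * opnorm X * norm x" by (simp add: mult_ac)
qed



lemma exp_diff_int:
  fixes p q :: real and z :: complex
  shows "integral {0..1} (\<lambda>s. (z * exp (of_real s * z * of_real p)) * exp (of_real (1 - s) * z * of_real q))
           * (of_real p - of_real q) = exp (z * of_real p) - exp (z * of_real q)"
proof -
  define d where "d = z * (of_real p - of_real q)"
  define c where "c = z * of_real q"
  define H where "H s = exp (c + of_real s * d)" for s :: real
  have der: "(H has_vector_derivative (exp (c + of_real s * d) * d)) (at s within {0..1})" for s
  proof -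
    have "((\<lambda>w. exp (c + w * d)) has_field_derivative (exp (c + of_real s * d) * d)) (at (of_real s))"
      by (auto intro!: derivative_eq_intros)
    then show ?thesis unfolding H_def by (rule has_vector_derivative_real_field)
  qed
  have ftc: "((\<lambda>s. exp (c + of_real s * d) * d) has_integral H 1 - H 0) {0..1}"
    by (rule fundamental_theorem_of_calculus) (auto intro: der)
  have H1: "H 1 = exp (z * of_real p)" by (simp add: H_def c_def d_def algebra_simps)
  have H0: "H 0 = exp (z * of_real q)" by (simp add: H_def c_def)
  have pt: "(z * exp (of_real s * z * of_real p)) * exp (of_real (1 - s) * z * of_real q)
           * (of_real p - of_real q) = exp (c + of_real s * d) * d" for s :: real
  proof -
    have arg: "of_real s * z * of_real p + of_real (1 - s) * z * of_real q = c + of_real s * d"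
      by (simp add: c_def d_def algebra_simps)
    have e: "exp (of_real s * z * of_real p) * exp (of_real (1 - s) * z * of_real q) = exp (c + of_real s * d)"
      by (simp only: exp_add[symmetric] arg)
    have "(z * exp (of_real s * z * of_real p)) * exp (of_real (1 - s) * z * of_real q)
           * (of_real p - of_real q) = (exp (of_real s * z * of_real p) * exp (of_real (1 - s) * z * of_real q)) * (z * (of_real p - of_real q))"
      by (simp add: mult_ac)
    then show ?thesis by (simp only: e d_def)
  qed
  have "integral {0..1} (\<lambda>s. (z * exp (of_real s * z * of_real p)) * exp (of_real (1 - s) * z * of_real q))
           * (of_real p - of_real q)
      = integral {0..1} (\<lambda>s. (z * exp (of_real s * z * of_real p)) * exp (of_real (1 - s) * z * of_real q)
           * (of_real p - of_real q))"
    by (simp only: integral_mult_left)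
  also have "\<dots> = integral {0..1} (\<lambda>s. exp (c + of_real s * d) * d)"
    by (simp only: pt)
  also have "\<dots> = H 1 - H 0" using ftc by (rule integral_unique)
  finally show ?thesis by (simp add: H1 H0)
qed

lemma den_pos:
  fixes a u :: real
  assumes "0 < a" "0 \<le> u" "u \<le> 1"
  shows "0 < 1 + u * (a - 1)"
proof (cases "a \<ge> 1")
  case True then show ?thesis using assms by (simp add: add_pos_nonneg)
next
  case False
  have "u * (1 - a) \<le> 1 * (1 - a)" using False assms by (intro mult_right_mono) auto
  then show ?thesis using assms by (simp add: algebra_simps)
qed

lemma log_diff_int:
  fixes a b :: real
  assumes a: "0 < a" and b: "0 < b"
  shows "integral {0..1} (\<lambda>u. 1 / (1 + u * (a - 1)) * (1 / (1 + u * (b - 1)))) * (a - b) = ln a - ln b"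
proof -
  define H where "H u = ln (1 + u * (a - 1)) - ln (1 + u * (b - 1))" for u :: real
  define h where "h u = (a - 1) / (1 + u * (a - 1)) - (b - 1) / (1 + u * (b - 1))" for u :: real
  have der: "(H has_vector_derivative h u) (at u within {0..1})" if u: "u \<in> {0..1}" for u
  proof -
    have pa: "0 < 1 + u * (a - 1)" and pb: "0 < 1 + u * (b - 1)" using den_pos a b u by auto
    have "(H has_real_derivative h u) (at u within {0..1})"
      unfolding H_def h_def using pa pb
      by (auto intro!: derivative_eq_intros simp: field_simps)
    then show ?thesis by (simp add: has_real_derivative_iff_has_vector_derivative)
  qed
  have ftc: "(h has_integral H 1 - H 0) {0..1}"
    by (rule fundamental_theorem_of_calculus) (auto intro: der)
  have pt: "1 / (1 + u * (a - 1)) * (1 / (1 + u * (b - 1))) * (a - b) = h u" if u: "u \<in> {0..1}" for u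
  proof -
    have pa: "0 < 1 + u * (a - 1)" and pb: "0 < 1 + u * (b - 1)" using den_pos a b u by auto
    then show ?thesis by (simp add: h_def field_simps)
  qed
  have "integral {0..1} (\<lambda>u. 1 / (1 + u * (a - 1)) * (1 / (1 + u * (b - 1)))) * (a - b)
      = integral {0..1} (\<lambda>u. 1 / (1 + u * (a - 1)) * (1 / (1 + u * (b - 1))) * (a - b))"
    by (simp only: integral_mult_left)
  also have "\<dots> = integral {0..1} h" by (rule integral_cong, rule pt)
  also have "\<dots> = H 1 - H 0" using ftc by (rule integral_unique)
  finally show ?thesis by (simp add: H_def)
qed

lemma inv_sq_int:
  fixes c :: real
  assumes c: "0 \<le> c" "c < 1"
  shows "((\<lambda>u. 1 / (1 - u * c) * (1 / (1 - u * c))) has_integral 1 / (1 - c)) {0..1}"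
proof -
  define H where "H u = u / (1 - u * c)" for u :: real
  have pos: "0 < 1 - u * c" if "u \<in> {0..1}" for u
  proof -
    have "u * c \<le> 1 * c" using that c by (intro mult_right_mono) auto
    then show ?thesis using c by simp
  qed
  have der: "(H has_vector_derivative (1 / (1 - u * c) * (1 / (1 - u * c)))) (at u within {0..1})"
    if u: "u \<in> {0..1}" for u
  proof -
    have p: "0 < 1 - u * c" using pos u by blast
    have "(H has_real_derivative (1 / (1 - u * c) * (1 / (1 - u * c)))) (at u within {0..1})"
      unfolding H_def using p
      by (auto intro!: derivative_eq_intros simp: field_simps)
    then show ?thesis by (simp add: has_real_derivative_iff_has_vector_derivative)
  qed
  have "((\<lambda>u. 1 / (1 - u * c) * (1 / (1 - u * c))) has_integral H 1 - H 0) {0..1}"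
    by (rule fundamental_theorem_of_calculus[OF _ der]) auto
  then show ?thesis by (simp add: H_def)
qed



lemma mm_diff_left: "(P::complex^'n^'n) ** (Q - R) = P ** Q - P ** R"
  by (simp add: vec_eq_iff matrix_matrix_mult_def right_diff_distrib sum_subtractf)
lemma mm_diff_right: "((Q::complex^'n^'n) - R) ** P = Q ** P - R ** P"
  by (simp add: vec_eq_iff matrix_matrix_mult_def left_diff_distrib sum_subtractf)

lemma conj_diff:
  assumes U: "unitary U" and V: "unitary V"
  shows "adj U ** (U ** dg d ** adj U - V ** dg e ** adj V) ** V
       = (\<chi> i j. (d i - e j) * (adj U ** V) $ i $ j)"
proof -
  have 1: "adj U ** (U ** dg d ** adj U) ** V = dg d ** (adj U ** V)"
    using U by (simp add: matrix_mul_assoc unitary_def)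
  have 2: "adj U ** (V ** dg e ** adj V) ** V = (adj U ** V) ** dg e"
    using V by (simp add: matrix_mul_assoc unit_cancel1)
  show ?thesis
    by (simp add: mm_diff_left mm_diff_right 1 2 vec_eq_iff dg_mult_left dg_mult_right
        left_diff_distrib mult.commute)
qed

lemma conj_back:
  assumes U: "unitary U" and V: "unitary V"
  shows "U ** (adj U ** M ** V) ** adj V = M"
  using U V by (simp add: matrix_mul_assoc unitary_def unit_cancel2)

lemma norm_axis_c: "norm (axis i (1::complex) :: complex^'n) = 1"
proof -
  have "hp (axis i (1::complex) :: complex^'n) (axis i 1) = (\<Sum>k\<in>UNIV. if k = i then 1 else 0)"
    unfolding hp_def axis_def by (rule sum.cong) auto
  then have "hp (axis i (1::complex) :: complex^'n) (axis i 1) = 1" by simp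
  then have "complex_of_real ((norm (axis i (1::complex) :: complex^'n))^2) = 1" by (simp only: hp_self)
  then have "(norm (axis i (1::complex) :: complex^'n))^2 = 1" by (simp only: of_real_eq_1_iff)
  then show ?thesis by simp
qed

lemma eig_vec:
  assumes U: "unitary U" and A: "A = U ** dg (\<lambda>i. complex_of_real (a i)) ** adj U"
  shows "A *v (U *v axis i 1) = a i *\<^sub>R (U *v axis i 1)"
proof -
  have "A *v (U *v axis i 1) = U *v (dg (\<lambda>i. complex_of_real (a i)) *v axis i 1)"
    using U by (simp add: A matrix_vector_mul_assoc unit_cancel1)
  also have "dg (\<lambda>i. complex_of_real (a i)) *v axis i 1 = a i *\<^sub>R axis i 1"
    by (auto simp: vec_eq_iff dg_mv axis_def scaleR_conv_of_real[where 'a=complex])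
  finally show ?thesis by (simp add: mv_scaleR)
qed

lemma diag_data:
  fixes A :: "complex^'n^'n"
  assumes pd: "pos_def A"
  shows "\<exists>U a. unitary U \<and> A = U ** dg (\<lambda>i. complex_of_real (a i)) ** adj U \<and>
     (\<forall>i. 0 < a i \<and> a i \<le> opnorm A \<and> 1 / a i \<le> opnorm (matrix_inv A))"
proof -
  have herm: "hermitian A" using pd by (simp add: pos_def_def)
  obtain U a where U: "unitary U" and A: "A = U ** dg (\<lambda>i. complex_of_real (a i)) ** adj U"
    using spectral[OF herm] by blast
  have props: "0 < a i \<and> a i \<le> opnorm A \<and> 1 / a i \<le> opnorm (matrix_inv A)" for i
  proof -
    define u where "u = U *v axis i 1"
    have nu: "norm u = 1" using U by (simp add: u_def unitary_norm norm_axis_c)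
    have Au: "A *v u = a i *\<^sub>R u" unfolding u_def by (rule eig_vec[OF U A])
    have "u \<noteq> 0" using nu by auto
    then have "0 < Re (hp u (A *v u))" using pd by (simp add: pos_def_def hp_def)
    also have "Re (hp u (A *v u)) = a i"
      using nu by (simp add: Au hp_scaleR_right hp_self)
    finally have ap: "0 < a i" .
    have "a i = norm (A *v u)" using ap nu by (simp add: Au)
    also have "\<dots> \<le> opnorm A * norm u" by (rule opnorm_bound)
    finally have a1: "a i \<le> opnorm A" using nu by simp
    define B where "B = U ** dg (\<lambda>i. complex_of_real (1 / a i)) ** adj U"
    have ane: "\<And>j. a j \<noteq> 0 \<Longrightarrow> complex_of_real (a j) * complex_of_real (1 / a j) = 1"
      by (simp add: field_simps)
    have "\<forall>j. a j \<noteq> 0"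
    proof
      fix j
      define w where "w = U *v axis j 1"
      have nw: "norm w = 1" using U by (simp add: w_def unitary_norm norm_axis_c)
      have Aw: "A *v w = a j *\<^sub>R w" unfolding w_def by (rule eig_vec[OF U A])
      have "w \<noteq> 0" using nw by auto
      then have "0 < Re (hp w (A *v w))" using pd by (simp add: pos_def_def hp_def)
      also have "Re (hp w (A *v w)) = a j"
        using nw by (simp add: Aw hp_scaleR_right hp_self)
      finally show "a j \<noteq> 0" by simp
    qed
    then have d1: "dg (\<lambda>i. complex_of_real (a i)) ** dg (\<lambda>i. complex_of_real (1 / a i)) = mat 1"
      "dg (\<lambda>i. complex_of_real (1 / a i)) ** dg (\<lambda>i. complex_of_real (a i)) = mat 1"
      by (simp_all add: dg_mult_dg mat1_dg ane mult.commute)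
    have AB: "A ** B = mat 1 \<and> B ** A = mat 1"
    proof
      have "A ** B = U ** (dg (\<lambda>i. complex_of_real (a i)) ** dg (\<lambda>i. complex_of_real (1 / a i))) ** adj U"
        using U by (simp add: A B_def matrix_mul_assoc unit_cancel1)
      then show "A ** B = mat 1" using U d1 by (simp add: unitary_def)
      have "B ** A = U ** (dg (\<lambda>i. complex_of_real (1 / a i)) ** dg (\<lambda>i. complex_of_real (a i))) ** adj U"
        using U by (simp add: A B_def matrix_mul_assoc unit_cancel1)
      then show "B ** A = mat 1" using U d1 by (simp add: unitary_def)
    qed
    have inv: "A ** matrix_inv A = mat 1 \<and> matrix_inv A ** A = mat 1"
      unfolding matrix_inv_def by (rule someI[of _ B]) (rule AB)
    have "u = matrix_inv A *v (A *v u)"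
      using inv by (simp add: matrix_vector_mul_assoc)
    also have "\<dots> = a i *\<^sub>R (matrix_inv A *v u)" by (simp add: Au mv_scaleR)
    finally have "1 = a i * norm (matrix_inv A *v u)" using nu ap
      by (metis norm_scaleR abs_of_pos)
    then have "1 / a i = norm (matrix_inv A *v u)" using ap by (simp add: field_simps)
    also have "\<dots> \<le> opnorm (matrix_inv A) * norm u" by (rule opnorm_bound)
    finally have "1 / a i \<le> opnorm (matrix_inv A)" using nu by simp
    then show ?thesis using ap a1 by simp
  qed
  show ?thesis using U A props by blast
qed



lemma re_bound:
  fixes s p L :: real and z :: complex
  assumes "0 \<le> s" "\<bar>p\<bar> \<le> L"
  shows "s * Re z * p \<le> s * (\<bar>Re z\<bar> * L)"
proof -
  have "Re z * p \<le> \<bar>Re z\<bar> * \<bar>p\<bar>" by (metis abs_ge_self abs_mult)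
  also have "\<dots> \<le> \<bar>Re z\<bar> * L" by (intro mult_left_mono assms) simp
  finally show ?thesis using assms(1) by (simp add: mult.assoc mult_left_mono)
qed

lemma const_int01: "integral {0..1::real} (\<lambda>s. c) = (c::real)"
  using has_integral_const_real[of c 0 1] by (simp add: integral_unique)

theorem mainTheorem11:
  fixes A B :: "complex^'n^'n" and z :: complex
  assumes "pos_def A" and "pos_def B"
  shows "opnorm (mcpow A z - mcpow B z)
    \<le> cmod z * (Max {opnorm A, opnorm (matrix_inv A), opnorm B, opnorm (matrix_inv B)})
         powr (1 + \<bar>Re z\<bar>) * opnorm (A - B)"
proof -
  obtain U a where U: "unitary U" and Ad: "A = U ** dg (\<lambda>i. complex_of_real (a i)) ** adj U"
    and aP: "\<forall>i. 0 < a i \<and> a i \<le> opnorm A \<and> 1 / a i \<le> opnorm (matrix_inv A)"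
    using diag_data[OF assms(1)] by blast
  obtain V b where V: "unitary V" and Bd: "B = V ** dg (\<lambda>i. complex_of_real (b i)) ** adj V"
    and bP: "\<forall>i. 0 < b i \<and> b i \<le> opnorm B \<and> 1 / b i \<le> opnorm (matrix_inv B)"
    using diag_data[OF assms(2)] by blast
  define M where "M = Max {opnorm A, opnorm (matrix_inv A), opnorm B, opnorm (matrix_inv B)}"
  have Mge: "opnorm A \<le> M" "opnorm (matrix_inv A) \<le> M" "opnorm B \<le> M" "opnorm (matrix_inv B) \<le> M"
    by (simp_all add: M_def)
  have apos: "0 < a i" and aM: "a i \<le> M" "1 / a i \<le> M" for i :: 'n
    using aP Mge by (meson order_trans)+
  have bpos: "0 < b i" and bM: "b i \<le> M" "1 / b i \<le> M" for i :: 'n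
    using bP Mge by (meson order_trans)+
  have Mpos: "0 < M" using apos[of undefined] aM(1)[of undefined] by linarith
  have M1: "1 \<le> M"
  proof (rule ccontr)
    assume "\<not> 1 \<le> M"
    then have "a undefined < 1" using aM(1)[of undefined] by linarith
    then have "1 < 1 / a undefined" using apos[of undefined] by (simp add: field_simps)
    then show False using aM(2)[of undefined] \<open>\<not> 1 \<le> M\<close> by linarith
  qed
  define L where "L = ln M"
  define p :: "'n \<Rightarrow> real" where "p = (\<lambda>i. ln (a i))"
  define q :: "'n \<Rightarrow> real" where "q = (\<lambda>j. ln (b j))"
  have pL: "\<bar>p i\<bar> \<le> L" for i :: 'n
  proof -
    have "ln (a i) \<le> ln M" using apos[of i] aM(1)[of i] Mpos by simp
    moreover have "ln (1 / a i) \<le> ln M" using apos[of i] aM(2)[of i] Mpos by (simp del: ln_div)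
    moreover have "ln (1 / a i) = - ln (a i)" using apos[of i] by (simp add: ln_div)
    ultimately show ?thesis by (simp add: p_def L_def abs_le_iff)
  qed
  have qL: "\<bar>q j\<bar> \<le> L" for j :: 'n
  proof -
    have "ln (b j) \<le> ln M" using bpos[of j] bM(1)[of j] Mpos by simp
    moreover have "ln (1 / b j) \<le> ln M" using bpos[of j] bM(2)[of j] Mpos by (simp del: ln_div)
    moreover have "ln (1 / b j) = - ln (b j)" using bpos[of j] by (simp add: ln_div)
    ultimately show ?thesis by (simp add: q_def L_def abs_le_iff)
  qed
  have Az: "mcpow A z = U ** dg (\<lambda>i. exp (z * complex_of_real (p i))) ** adj U"
    unfolding p_def by (rule mcpow_eq[OF U apos Ad])
  have Bz: "mcpow B z = V ** dg (\<lambda>i. exp (z * complex_of_real (q i))) ** adj V"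
    unfolding q_def by (rule mcpow_eq[OF V bpos Bd])
  define W :: "complex^'n^'n" where "W = adj U ** V"
  define X :: "complex^'n^'n" where "X = adj U ** (A - B) ** V"
  have Xe: "X = (\<chi> i j. (complex_of_real (a i) - complex_of_real (b j)) * W $ i $ j)"
    unfolding X_def W_def
    by (subst Ad, subst Bd, rule conj_diff[OF U V])
  define Y :: "complex^'n^'n" where "Y = adj U ** (mcpow A z - mcpow B z) ** V"
  have Ye: "Y = (\<chi> i j. (exp (z * complex_of_real (p i)) - exp (z * complex_of_real (q j))) * W $ i $ j)"
    unfolding Y_def W_def Az Bz by (rule conj_diff[OF U V])
  have bk: "mcpow A z - mcpow B z = U ** Y ** adj V"
    unfolding Y_def by (rule conj_back[OF U V, symmetric])
  have n1: "opnorm (mcpow A z - mcpow B z) \<le> opnorm Y"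
    unfolding bk by (rule opnorm_unit_conj[OF U unitary_adj[OF V]])
  have n2: "opnorm X \<le> opnorm (A - B)"
    unfolding X_def by (rule opnorm_unit_conj[OF unitary_adj[OF U] V])
  define Z :: "complex^'n^'n" where "Z = (\<chi> i j. (complex_of_real (p i) - complex_of_real (q j)) * W $ i $ j)"
  define f1 :: "real \<Rightarrow> 'n \<Rightarrow> complex"
    where "f1 = (\<lambda>s i. z * exp (complex_of_real s * z * complex_of_real (p i)))"
  define g1 :: "real \<Rightarrow> 'n \<Rightarrow> complex"
    where "g1 = (\<lambda>s j. exp (complex_of_real (1 - s) * z * complex_of_real (q j)))"
  have eq1: "integral {0..1} (\<lambda>s. f1 s i * g1 s j) * ((complex_of_real (p i) - complex_of_real (q j)) * W $ i $ j)
      = (exp (z * complex_of_real (p i)) - exp (z * complex_of_real (q j))) * W $ i $ j" for i j :: 'n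
  proof -
    have e: "integral {0..1} (\<lambda>s. f1 s i * g1 s j) * (complex_of_real (p i) - complex_of_real (q j))
      = exp (z * complex_of_real (p i)) - exp (z * complex_of_real (q j))"
      unfolding f1_def g1_def by (rule exp_diff_int)
    show ?thesis by (simp only: mult.assoc[symmetric] e)
  qed
  have YZ: "Y = (\<chi> i j. integral {0..1} (\<lambda>s. f1 s i * g1 s j) * Z $ i $ j)"
    unfolding Ye Z_def by (simp only: vec_eq_iff vec_lambda_beta eq1 simp_thms)
  define f2 :: "real \<Rightarrow> 'n \<Rightarrow> complex"
    where "f2 = (\<lambda>u i. complex_of_real (1 / (1 + u * (a i - 1))))"
  define g2 :: "real \<Rightarrow> 'n \<Rightarrow> complex"
    where "g2 = (\<lambda>u j. complex_of_real (1 / (1 + u * (b j - 1))))"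
  have nza: "\<forall>u::real\<in>{0..1}. 1 + u * (a i - 1) \<noteq> 0" for i :: 'n
    using den_pos[OF apos] by (metis atLeastAtMost_iff less_irrefl)
  have nzb: "\<forall>u::real\<in>{0..1}. 1 + u * (b j - 1) \<noteq> 0" for j :: 'n
    using den_pos[OF bpos] by (metis atLeastAtMost_iff less_irrefl)
  have eq2: "integral {0..1} (\<lambda>u. f2 u i * g2 u j) * X $ i $ j = Z $ i $ j" for i j :: 'n
  proof -
    let ?r = "\<lambda>u. 1 / (1 + u * (a i - 1)) * (1 / (1 + u * (b j - 1)))"
    have cr: "continuous_on {0..1} ?r"
      by (intro continuous_intros) (use nza[of i] nzb[of j] in auto)
    have "(?r has_integral integral {0..1} ?r) {0..1}"
      using integrable_continuous_real[OF cr] by (rule integrable_integral)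
    then have "((\<lambda>u. complex_of_real (?r u)) has_integral complex_of_real (integral {0..1} ?r)) {0..1}"
      by (rule has_integral_of_real)
    moreover have "(\<lambda>u. f2 u i * g2 u j) = (\<lambda>u. complex_of_real (?r u))"
      by (simp add: f2_def g2_def fun_eq_iff)
    ultimately have "integral {0..1} (\<lambda>u. f2 u i * g2 u j) = complex_of_real (integral {0..1} ?r)"
      by (simp add: integral_unique)
    then have "integral {0..1} (\<lambda>u. f2 u i * g2 u j) * X $ i $ j
        = complex_of_real (integral {0..1} ?r * (a i - b j)) * W $ i $ j"
      by (simp add: Xe mult.assoc)
    also have "\<dots> = Z $ i $ j"
      using log_diff_int[OF apos[of i] bpos[of j]] by (simp add: Z_def p_def q_def)
    finally show ?thesis .
  qed
  have ZX: "Z = (\<chi> i j. integral {0..1} (\<lambda>u. f2 u i * g2 u j) * X $ i $ j)"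
    by (simp only: vec_eq_iff vec_lambda_beta eq2 simp_thms)
  define k where "k = \<bar>Re z\<bar> * L"
  define C1 where "C1 = cmod z * exp k"
  have s1: "opnorm Y \<le> C1 * opnorm Z"
    unfolding YZ
  proof (rule schur[where F = "\<lambda>s. cmod z * exp (s * k)" and G = "\<lambda>s. exp ((1 - s) * k)"])
    show "continuous_on {0..1} (\<lambda>s. f1 s i)" for i :: 'n unfolding f1_def by (intro continuous_intros)
    show "continuous_on {0..1} (\<lambda>s. g1 s j)" for j :: 'n unfolding g1_def by (intro continuous_intros)
    show "continuous_on {0..1} (\<lambda>s. cmod z * exp (s * k) * exp ((1 - s) * k))" by (intro continuous_intros)
    show "cmod (f1 s i) \<le> cmod z * exp (s * k)" if "s \<in> {0..1}" for s :: real and i :: 'n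
    proof -
      have "cmod (f1 s i) = cmod z * exp (s * Re z * p i)" by (simp add: f1_def norm_mult)
      also have "\<dots> \<le> cmod z * exp (s * k)"
        using re_bound[of s "p i" L z] that pL[of i] by (intro mult_left_mono) (auto simp: k_def)
      finally show ?thesis .
    qed
    show "cmod (g1 s j) \<le> exp ((1 - s) * k)" if "s \<in> {0..1}" for s :: real and j :: 'n
    proof -
      have "cmod (g1 s j) = exp ((1 - s) * Re z * q j)" by (simp add: g1_def)
      also have "\<dots> \<le> exp ((1 - s) * k)"
        using re_bound[of "1 - s" "q j" L z] that qL[of j] by (simp add: k_def)
      finally show ?thesis .
    qed
    have "(\<lambda>s. cmod z * exp (s * k) * exp ((1 - s) * k)) = (\<lambda>s. C1)"
      by (simp add: fun_eq_iff C1_def mult.assoc exp_add[symmetric] algebra_simps)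
    then show "integral {0..1} (\<lambda>s. cmod z * exp (s * k) * exp ((1 - s) * k)) \<le> C1"
      by (simp add: const_int01)
  qed
  define c where "c = 1 - 1 / M"
  have c0: "0 \<le> c" and c1: "c < 1" using M1 Mpos by (auto simp: c_def field_simps)
  have pos_c: "0 < 1 - u * c" if "u \<in> {0..1}" for u :: real
    using den_pos[of "1 / M" u] that Mpos by (simp add: c_def algebra_simps)
  have bnd2: "1 / (1 + u * (x - 1)) \<le> 1 / (1 - u * c)" if u: "u \<in> {0..1}" and x: "0 < x" "1 / M \<le> x" for u x :: real
  proof -
    have "u * (1 / M) \<le> u * x" using u x by (intro mult_left_mono) auto
    then have "1 - u * c \<le> 1 + u * (x - 1)" by (simp add: c_def algebra_simps)
    then show ?thesis using pos_c[OF u] by (intro divide_left_mono) auto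
  qed
  have s2: "opnorm Z \<le> M * opnorm X"
    unfolding ZX
  proof (rule schur[where F = "\<lambda>u. 1 / (1 - u * c)" and G = "\<lambda>u. 1 / (1 - u * c)"])
    show "continuous_on {0..1} (\<lambda>u. f2 u i)" for i :: 'n unfolding f2_def
      by (intro continuous_intros) (use nza[of i] in auto)
    show "continuous_on {0..1} (\<lambda>u. g2 u j)" for j :: 'n unfolding g2_def
      by (intro continuous_intros) (use nzb[of j] in auto)
    show "continuous_on {0..1} (\<lambda>u. 1 / (1 - u * c) * (1 / (1 - u * c)))"
    proof -
      have nzc: "\<forall>x\<in>{0..1}. 1 - x * c \<noteq> 0" using pos_c by (metis less_irrefl)
      show ?thesis by (intro continuous_intros nzc)
    qed
    show "cmod (f2 u i) \<le> 1 / (1 - u * c)" if "u \<in> {0..1}" for u :: real and i :: 'n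
    proof -
      have "0 < 1 + u * (a i - 1)" using den_pos[OF apos[of i]] that by simp
      then have "cmod (f2 u i) = 1 / (1 + u * (a i - 1))"
        unfolding f2_def norm_of_real by simp
      also have "\<dots> \<le> 1 / (1 - u * c)"
      proof -
        have "1 / M \<le> a i" using aM(2)[of i] apos[of i] Mpos by (simp add: field_simps mult.commute)
        then show ?thesis by (rule bnd2[OF that apos[of i]])
      qed
      finally show ?thesis .
    qed
    show "cmod (g2 u j) \<le> 1 / (1 - u * c)" if "u \<in> {0..1}" for u :: real and j :: 'n
    proof -
      have "0 < 1 + u * (b j - 1)" using den_pos[OF bpos[of j]] that by simp
      then have "cmod (g2 u j) = 1 / (1 + u * (b j - 1))"
        unfolding g2_def norm_of_real by simp
      also have "\<dots> \<le> 1 / (1 - u * c)"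
      proof -
        have "1 / M \<le> b j" using bM(2)[of j] bpos[of j] Mpos by (simp add: field_simps mult.commute)
        then show ?thesis by (rule bnd2[OF that bpos[of j]])
      qed
      finally show ?thesis .
    qed
    have "integral {0..1} (\<lambda>u. 1 / (1 - u * c) * (1 / (1 - u * c))) = 1 / (1 - c)"
      using inv_sq_int[OF c0 c1] by (rule integral_unique)
    also have "1 / (1 - c) = M" using Mpos by (simp add: c_def)
    finally show "integral {0..1} (\<lambda>u. 1 / (1 - u * c) * (1 / (1 - u * c))) \<le> M" by simp
  qed
  have C1nn: "0 \<le> C1" by (simp add: C1_def)
  have "opnorm (mcpow A z - mcpow B z) \<le> C1 * (M * opnorm (A - B))"
  proof -
    have "opnorm (mcpow A z - mcpow B z) \<le> C1 * opnorm Z" using n1 s1 by linarith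
    also have "\<dots> \<le> C1 * (M * opnorm X)" by (rule mult_left_mono[OF s2 C1nn])
    also have "\<dots> \<le> C1 * (M * opnorm (A - B))"
      by (intro mult_left_mono n2 C1nn) (use Mpos in simp)
    finally show ?thesis .
  qed
  also have "C1 * (M * opnorm (A - B)) = cmod z * M powr (1 + \<bar>Re z\<bar>) * opnorm (A - B)"
  proof -
    have "M powr (1 + \<bar>Re z\<bar>) = M * exp k"
    proof -
      have "M powr (1 + \<bar>Re z\<bar>) = exp (ln M + \<bar>Re z\<bar> * ln M)"
        using Mpos by (simp add: powr_def algebra_simps)
      also have "\<dots> = M * exp k" using Mpos by (simp add: exp_add k_def L_def)
      finally show ?thesis .
    qed
    then show ?thesis by (simp add: C1_def mult_ac)
  qed
  finally show ?thesis by (simp only: M_def)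
qed

end
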